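(* Let $t$ be a $\lambda\mu$-term and $y$ a $\lambda$-variable. If $(t\;y)$ is normalizable, then $t$ is normalizable.
   Context: $\lambda\mu$-terms: $t::= x\mid \lambda x.t\mid (t\;t)\mid \mu a.t\mid (a\;t)$ over disjoint infinite sets of $\lambda$-variables and $\mu$-variables. Reduction $(\lambda x.u\;v)\triangleright u[x:=v]$, $(\mu a.u\;v)\triangleright\mu a.u[a:=^*v]$ ($u[a:=^*v]$ replaces each subterm $(a\;w)$ of $u$ by $(a\;(w\;v))$); a term is normalizable if it reduces (by the compatible closure of these rules) to a normal form. *)

theory Defs
  imports Main
begin

text \<open>Lambda-mu terms in de Bruijn style, with two separate
index spaces: Var i refers to lambda-binders (Lam), MApp a t refers to mu-binders (Mu).\<close>

datatype trm = Var nat | Lam trm | App trm trm | Mu trm | MApp nat trm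

fun liftL :: "nat \<Rightarrow> trm \<Rightarrow> trm" where
  "liftL k (Var i) = (if i < k then Var i else Var (Suc i))"
| "liftL k (Lam t) = Lam (liftL (Suc k) t)"
| "liftL k (App t u) = App (liftL k t) (liftL k u)"
| "liftL k (Mu t) = Mu (liftL k t)"
| "liftL k (MApp a t) = MApp a (liftL k t)"

fun liftM :: "nat \<Rightarrow> trm \<Rightarrow> trm" where
  "liftM k (Var i) = Var i"
| "liftM k (Lam t) = Lam (liftM k t)"
| "liftM k (App t u) = App (liftM k t) (liftM k u)"
| "liftM k (Mu t) = Mu (liftM (Suc k) t)"
| "liftM k (MApp a t) = MApp (if a < k then a else Suc a) (liftM k t)"

fun substL :: "trm \<Rightarrow> nat \<Rightarrow> trm \<Rightarrow> trm" where
  "substL (Var i) k s = (if i < k then Var i else if i = k then s else Var (i - 1))"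
| "substL (Lam t) k s = Lam (substL t (Suc k) (liftL 0 s))"
| "substL (App t u) k s = App (substL t k s) (substL u k s)"
| "substL (Mu t) k s = Mu (substL t k (liftM 0 s))"
| "substL (MApp a t) k s = MApp a (substL t k s)"

fun msubst :: "trm \<Rightarrow> nat \<Rightarrow> trm \<Rightarrow> trm" where
  "msubst (Var i) k v = Var i"
| "msubst (Lam t) k v = Lam (msubst t k (liftL 0 v))"
| "msubst (App t u) k v = App (msubst t k v) (msubst u k v)"
| "msubst (Mu t) k v = Mu (msubst t (Suc k) (liftM 0 v))"
| "msubst (MApp a t) k v =
     (if a = k then MApp a (App (msubst t k v) v) else MApp a (msubst t k v))"

inductive red1 :: "trm \<Rightarrow> trm \<Rightarrow> bool" where
  beta: "red1 (App (Lam u) v) (substL u 0 v)"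
| mu:   "red1 (App (Mu u) v) (Mu (msubst u 0 (liftM 0 v)))"
| lam:  "red1 t t' \<Longrightarrow> red1 (Lam t) (Lam t')"
| appL: "red1 t t' \<Longrightarrow> red1 (App t u) (App t' u)"
| appR: "red1 u u' \<Longrightarrow> red1 (App t u) (App t u')"
| muC:  "red1 t t' \<Longrightarrow> red1 (Mu t) (Mu t')"
| mapp: "red1 t t' \<Longrightarrow> red1 (MApp a t) (MApp a t')"

definition normal :: "trm \<Rightarrow> bool" where
  "normal t \<longleftrightarrow> (\<nexists>t'. red1 t t')"

definition normalizable :: "trm \<Rightarrow> bool" where
  "normalizable t \<longleftrightarrow> (\<exists>u. red1\<^sup>*\<^sup>* t u \<and> normal u)"

end

theory Submission imports Defs begin
definition lift :: "(nat\<Rightarrow>nat) \<Rightarrow> nat \<Rightarrow> nat" where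
 "lift \<rho> i = (case i of 0 \<Rightarrow> 0 | Suc i \<Rightarrow> Suc (\<rho> i))"
definition liftm :: "(nat \<Rightarrow> nat option) \<Rightarrow> nat \<Rightarrow> nat option" where
 "liftm m b = map_option Suc (m b)"
definition shiftm :: "(nat \<Rightarrow> nat option) \<Rightarrow> nat \<Rightarrow> nat option" where
 "shiftm m b = (case b of 0 \<Rightarrow> None | Suc c \<Rightarrow> m c)"
definition consr :: "nat \<Rightarrow> (nat\<Rightarrow>nat) \<Rightarrow> nat \<Rightarrow> nat" where
 "consr j \<rho> i = (case i of 0 \<Rightarrow> j | Suc i \<Rightarrow> \<rho> i)"
definition consm :: "nat \<Rightarrow> (nat \<Rightarrow> nat option) \<Rightarrow> nat \<Rightarrow> nat option" where
 "consm j m b = (case b of 0 \<Rightarrow> Some j | Suc c \<Rightarrow> m c)"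

inductive R :: "(nat\<Rightarrow>nat) \<Rightarrow> (nat \<Rightarrow> nat option) \<Rightarrow> trm \<Rightarrow> trm \<Rightarrow> bool"
 and A :: "(nat\<Rightarrow>nat) \<Rightarrow> (nat \<Rightarrow> nat option) \<Rightarrow> nat \<Rightarrow> trm \<Rightarrow> trm \<Rightarrow> bool" where
  R_var: "R \<rho> m (Var i) (Var (\<rho> i))"
| R_lam: "R (lift \<rho>) (liftm m) p q \<Longrightarrow> R \<rho> m (Lam p) (Lam q)"
| R_app: "R \<rho> m p q \<Longrightarrow> R \<rho> m p' q' \<Longrightarrow> R \<rho> m (App p p') (App q q')"
| R_mu: "R \<rho> (shiftm m) p q \<Longrightarrow> R \<rho> m (Mu p) (Mu q)"
| R_mapp: "m b = None \<Longrightarrow> R \<rho> m p q \<Longrightarrow> R \<rho> m (MApp b p) (MApp b q)"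
| R_mark: "m b = Some j \<Longrightarrow> A \<rho> m j p q \<Longrightarrow> R \<rho> m (MApp b p) (MApp b q)"
| A_app: "R \<rho> m p q \<Longrightarrow> A \<rho> m j p (App q (Var j))"
| A_lam: "R (consr j \<rho>) m p q \<Longrightarrow> A \<rho> m j (Lam p) q"
| A_mu: "R \<rho> (consm j m) p q \<Longrightarrow> A \<rho> m j (Mu p) (Mu q)"

fun ren :: "(nat \<Rightarrow> nat) \<Rightarrow> trm \<Rightarrow> trm" where
  "ren \<sigma> (Var i) = Var (\<sigma> i)"
| "ren \<sigma> (Lam t) = Lam (ren (lift \<sigma>) t)"
| "ren \<sigma> (App t u) = App (ren \<sigma> t) (ren \<sigma> u)"
| "ren \<sigma> (Mu t) = Mu (ren \<sigma> t)"
| "ren \<sigma> (MApp a t) = MApp a (ren \<sigma> t)"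

lemma liftL_ren: "liftL k t = ren (\<lambda>i. if i < k then i else Suc i) t"
proof (induction t arbitrary: k)
  case (Lam t)
  have "lift (\<lambda>i. if i < k then i else Suc i) = (\<lambda>i. if i < Suc k then i else Suc i)"
    by (auto simp: lift_def fun_eq_iff split: nat.split)
  then show ?case using Lam by simp
qed auto

lemma substL_ren: "substL t k (Var j) = ren (\<lambda>i. if i < k then i else if i = k then j else i - 1) t"
proof (induction t arbitrary: k j)
  case (Lam t)
  have "lift (\<lambda>i. if i < k then i else if i = k then j else i - 1) = (\<lambda>i. if i < Suc k then i else if i = Suc k then Suc j else i - 1)"
    by (auto simp: lift_def fun_eq_iff split: nat.split)
  then show ?case using Lam by simp
qed auto

lemma R_var': "x = \<rho> i \<Longrightarrow> R \<rho> m (Var i) (Var x)"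
  using R_var by simp

lemma R_ren0:
 shows "R \<rho> m p q \<Longrightarrow> \<forall>(\<rho>'::nat\<Rightarrow>nat) (m'::nat\<Rightarrow>nat option) (\<tau>::nat\<Rightarrow>nat) (\<sigma>::nat\<Rightarrow>nat). (\<forall>i. \<rho>' (\<tau> i) = \<sigma> (\<rho> i)) \<longrightarrow> (\<forall>b. m' b = map_option \<sigma> (m b)) \<longrightarrow> R \<rho>' m' (ren \<tau> p) (ren \<sigma> q)"
 and "A \<rho> m j p q \<Longrightarrow> \<forall>(\<rho>'::nat\<Rightarrow>nat) (m'::nat\<Rightarrow>nat option) (\<tau>::nat\<Rightarrow>nat) (\<sigma>::nat\<Rightarrow>nat). (\<forall>i. \<rho>' (\<tau> i) = \<sigma> (\<rho> i)) \<longrightarrow> (\<forall>b. m' b = map_option \<sigma> (m b)) \<longrightarrow> A \<rho>' m' (\<sigma> j) (ren \<tau> p) (ren \<sigma> q)"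
proof (induction rule: R_A.inducts)
  case (R_var \<rho> m i)
  then show ?case by (auto intro: R_var')
next
  case (R_lam \<rho> m p q)
  show ?case proof (intro allI impI)
    fix \<rho>' :: "nat\<Rightarrow>nat" and m' :: "nat\<Rightarrow>nat option" and \<tau> \<sigma> :: "nat\<Rightarrow>nat" assume h: "\<forall>i. \<rho>' (\<tau> i) = \<sigma> (\<rho> i)" "\<forall>b. m' b = map_option \<sigma> (m b)"
    have "R (lift \<rho>') (liftm m') (ren (lift \<tau>) p) (ren (lift \<sigma>) q)"
    proof -
      have c1: "\<And>i. lift \<rho>' (lift \<tau> i) = lift \<sigma> (lift \<rho> i)" using h by (auto simp: lift_def split: nat.split)
      have c2: "\<And>b. liftm m' b = map_option (lift \<sigma>) (liftm m b)" using h by (auto simp: lift_def liftm_def option.map_comp o_def split: nat.split)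
      show ?thesis by (rule R_lam.IH[rule_format], rule c1, rule c2)
    qed
    then show "R \<rho>' m' (ren \<tau> (Lam p)) (ren \<sigma> (Lam q))" by (auto intro: R_A.intros)
  qed
next
  case (R_app \<rho> m p q p' q')
  then show ?case by (auto intro: R_A.intros)
next
  case (R_mu \<rho> m p q)
  show ?case proof (intro allI impI)
    fix \<rho>' :: "nat\<Rightarrow>nat" and m' :: "nat\<Rightarrow>nat option" and \<tau> \<sigma> :: "nat\<Rightarrow>nat" assume h: "\<forall>i. \<rho>' (\<tau> i) = \<sigma> (\<rho> i)" "\<forall>b. m' b = map_option \<sigma> (m b)"
    have "R \<rho>' (shiftm m') (ren \<tau> p) (ren \<sigma> q)"
    proof -
      have c2: "\<And>b. shiftm m' b = map_option \<sigma> (shiftm m b)" using h by (auto simp: shiftm_def split: nat.split)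
      show ?thesis by (rule R_mu.IH[rule_format], rule h(1)[rule_format], rule c2)
    qed
    then show "R \<rho>' m' (ren \<tau> (Mu p)) (ren \<sigma> (Mu q))" by (auto intro: R_A.intros)
  qed
next
  case (R_mapp m b \<rho> p q)
  then show ?case by (auto intro: R_A.intros)
next
  case (R_mark m b j \<rho> p q)
  show ?case proof (intro allI impI)
    fix \<rho>' :: "nat\<Rightarrow>nat" and m' :: "nat\<Rightarrow>nat option" and \<tau> \<sigma> :: "nat\<Rightarrow>nat" assume h: "\<forall>i. \<rho>' (\<tau> i) = \<sigma> (\<rho> i)" "\<forall>b. m' b = map_option \<sigma> (m b)"
    have "A \<rho>' m' (\<sigma> j) (ren \<tau> p) (ren \<sigma> q)" using R_mark.IH h by blast
    moreover have "m' b = Some (\<sigma> j)" using R_mark h by simp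
    ultimately show "R \<rho>' m' (ren \<tau> (MApp b p)) (ren \<sigma> (MApp b q))" by (auto intro: R_A.intros)
  qed
next
  case (A_app \<rho> m p q j)
  then show ?case by (auto intro: R_A.intros)
next
  case (A_lam j \<rho> m p q)
  show ?case proof (intro allI impI)
    fix \<rho>' :: "nat\<Rightarrow>nat" and m' :: "nat\<Rightarrow>nat option" and \<tau> \<sigma> :: "nat\<Rightarrow>nat" assume h: "\<forall>i. \<rho>' (\<tau> i) = \<sigma> (\<rho> i)" "\<forall>b. m' b = map_option \<sigma> (m b)"
    have "R (consr (\<sigma> j) \<rho>') m' (ren (lift \<tau>) p) (ren \<sigma> q)"
    proof -
      have c1: "\<And>i. consr (\<sigma> j) \<rho>' (lift \<tau> i) = \<sigma> (consr j \<rho> i)" using h by (auto simp: lift_def consr_def split: nat.split)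
      show ?thesis by (rule A_lam.IH[rule_format], rule c1, rule h(2)[rule_format])
    qed
    then show "A \<rho>' m' (\<sigma> j) (ren \<tau> (Lam p)) (ren \<sigma> q)" by (auto intro: R_A.intros)
  qed
next
  case (A_mu \<rho> j m p q)
  show ?case proof (intro allI impI)
    fix \<rho>' :: "nat\<Rightarrow>nat" and m' :: "nat\<Rightarrow>nat option" and \<tau> \<sigma> :: "nat\<Rightarrow>nat" assume h: "\<forall>i. \<rho>' (\<tau> i) = \<sigma> (\<rho> i)" "\<forall>b. m' b = map_option \<sigma> (m b)"
    have "R \<rho>' (consm (\<sigma> j) m') (ren \<tau> p) (ren \<sigma> q)"
    proof -
      have c2: "\<And>b. consm (\<sigma> j) m' b = map_option \<sigma> (consm j m b)" using h by (auto simp: consm_def split: nat.split)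
      show ?thesis by (rule A_mu.IH[rule_format], rule h(1)[rule_format], rule c2)
    qed
    then show "A \<rho>' m' (\<sigma> j) (ren \<tau> (Mu p)) (ren \<sigma> (Mu q))" by (auto intro: R_A.intros)
  qed
qed

lemma R_ren: "R \<rho> m p q \<Longrightarrow> (\<And>i. \<rho>' (\<tau> i) = \<sigma> (\<rho> i)) \<Longrightarrow> (\<And>b. m' b = map_option \<sigma> (m b)) \<Longrightarrow> R \<rho>' m' (ren \<tau> p) (ren \<sigma> q)"
  using R_ren0(1) by blast


lemma ren_id: "(\<forall>i. \<sigma> i = i) \<Longrightarrow> ren \<sigma> t = t"
proof (induction t arbitrary: \<sigma>)
  case (Lam t)
  have h: "\<forall>i. lift \<sigma> i = i" using Lam.prems by (auto simp: lift_def split: nat.split)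
  from Lam.IH[OF h] show ?case by simp
qed auto

lemma liftL0: "liftL 0 t = ren Suc t"
  by (simp add: liftL_ren)

lemma R_lift: "R \<rho> m s s' \<Longrightarrow> R (lift \<rho>) (liftm m) (ren Suc s) (ren Suc s')"
  by (rule R_ren) (auto simp: lift_def liftm_def)

lemma R_liftu: "R \<rho> m s s' \<Longrightarrow> R (consr j \<rho>) m (ren Suc s) s'"
proof -
  assume "R \<rho> m s s'"
  then have "R (consr j \<rho>) m (ren Suc s) (ren id s')"
    by (rule R_ren) (auto simp: consr_def option.map_id)
  then show ?thesis by (simp add: ren_id)
qed

lemma R_liftM0:
 shows "R \<rho> m p q \<Longrightarrow> \<forall>k (m'::nat\<Rightarrow>nat option). (\<forall>b. m' (if b < k then b else Suc b) = m b) \<longrightarrow> R \<rho> m' (liftM k p) (liftM k q)"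
 and "A \<rho> m j p q \<Longrightarrow> \<forall>k (m'::nat\<Rightarrow>nat option). (\<forall>b. m' (if b < k then b else Suc b) = m b) \<longrightarrow> A \<rho> m' j (liftM k p) (liftM k q)"
proof (induction rule: R_A.inducts)
  case (R_var \<rho> m i)
  then show ?case by (auto intro: R_A.intros)
next
  case (R_lam \<rho> m p q)
  show ?case proof (intro allI impI)
    fix k and m' :: "nat\<Rightarrow>nat option" assume h: "\<forall>b. m' (if b < k then b else Suc b) = m b"
    have "\<forall>b. liftm m' (if b < k then b else Suc b) = liftm m b" using h by (simp add: liftm_def)
    then have "R (lift \<rho>) (liftm m') (liftM k p) (liftM k q)" using R_lam.IH by blast
    then show "R \<rho> m' (liftM k (Lam p)) (liftM k (Lam q))" by (auto intro: R_A.intros)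
  qed
next
  case (R_app \<rho> m p q p' q')
  then show ?case by (auto intro: R_A.intros)
next
  case (R_mu \<rho> m p q)
  show ?case proof (intro allI impI)
    fix k and m' :: "nat\<Rightarrow>nat option" assume h: "\<forall>b. m' (if b < k then b else Suc b) = m b"
    have "\<forall>b. shiftm m' (if b < Suc k then b else Suc b) = shiftm m b"
    proof
      fix b show "shiftm m' (if b < Suc k then b else Suc b) = shiftm m b"
        using h by (cases b) (auto simp: shiftm_def split: if_splits)
    qed
    then have "R \<rho> (shiftm m') (liftM (Suc k) p) (liftM (Suc k) q)" using R_mu.IH by blast
    then show "R \<rho> m' (liftM k (Mu p)) (liftM k (Mu q))" by (auto intro: R_A.intros)
  qed
next
  case (R_mapp m b \<rho> p q)
  show ?case proof (intro allI impI)
    fix k and m' :: "nat\<Rightarrow>nat option" assume h: "\<forall>b. m' (if b < k then b else Suc b) = m b"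
    have "R \<rho> m' (liftM k p) (liftM k q)" using R_mapp.IH h by blast
    moreover have "m' (if b < k then b else Suc b) = None" using h R_mapp.hyps by simp
    ultimately show "R \<rho> m' (liftM k (MApp b p)) (liftM k (MApp b q))" by (auto intro: R_A.intros)
  qed
next
  case (R_mark m b j \<rho> p q)
  show ?case proof (intro allI impI)
    fix k and m' :: "nat\<Rightarrow>nat option" assume h: "\<forall>b. m' (if b < k then b else Suc b) = m b"
    have "A \<rho> m' j (liftM k p) (liftM k q)" using R_mark.IH h by blast
    moreover have "m' (if b < k then b else Suc b) = Some j" using h R_mark.hyps by simp
    ultimately show "R \<rho> m' (liftM k (MApp b p)) (liftM k (MApp b q))" by (auto intro: R_A.intros)
  qed
next
  case (A_app \<rho> m p q j)
  then show ?case by (auto intro: R_A.intros)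
next
  case (A_lam j \<rho> m p q)
  then show ?case by (auto intro: R_A.intros)
next
  case (A_mu \<rho> j m p q)
  show ?case proof (intro allI impI)
    fix k and m' :: "nat\<Rightarrow>nat option" assume h: "\<forall>b. m' (if b < k then b else Suc b) = m b"
    have "\<forall>b. consm j m' (if b < Suc k then b else Suc b) = consm j m b"
    proof
      fix b show "consm j m' (if b < Suc k then b else Suc b) = consm j m b"
        using h by (cases b) (auto simp: consm_def split: if_splits)
    qed
    then have "R \<rho> (consm j m') (liftM (Suc k) p) (liftM (Suc k) q)" using A_mu.IH by blast
    then show "A \<rho> m' j (liftM k (Mu p)) (liftM k (Mu q))" by (auto intro: R_A.intros)
  qed
qed

lemma R_liftM: "R \<rho> m s s' \<Longrightarrow> (\<And>b. m' (Suc b) = m b) \<Longrightarrow> R \<rho> m' (liftM 0 s) (liftM 0 s')"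
  using R_liftM0(1)[of \<rho> m s s'] by auto


lemma R_msv0:
 shows "R \<rho> m p q \<Longrightarrow> \<forall>c j'. m c = None \<longrightarrow> R \<rho> (m(c := Some j')) p (msubst q c (Var j'))"
 and "A \<rho> m j p q \<Longrightarrow> \<forall>c j'. m c = None \<longrightarrow> A \<rho> (m(c := Some j')) j p (msubst q c (Var j'))"
proof (induction rule: R_A.inducts)
  case (R_var \<rho> m i)
  then show ?case by (auto intro: R_A.intros)
next
  case (R_lam \<rho> m p q)
  show ?case proof (intro allI impI)
    fix c j' assume h: "m c = None"
    have "liftm m c = None" using h by (simp add: liftm_def)
    then have "R (lift \<rho>) ((liftm m)(c := Some (Suc j'))) p (msubst q c (Var (Suc j')))" using R_lam.IH by blast
    moreover have "(liftm m)(c := Some (Suc j')) = liftm (m(c := Some j'))" by (auto simp: liftm_def fun_eq_iff)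
    ultimately show "R \<rho> (m(c := Some j')) (Lam p) (msubst (Lam q) c (Var j'))" by (auto intro: R_A.intros)
  qed
next
  case (R_app \<rho> m p q p' q')
  then show ?case by (auto intro: R_A.intros)
next
  case (R_mu \<rho> m p q)
  show ?case proof (intro allI impI)
    fix c j' assume h: "m c = None"
    have "shiftm m (Suc c) = None" using h by (simp add: shiftm_def)
    then have "R \<rho> ((shiftm m)(Suc c := Some j')) p (msubst q (Suc c) (Var j'))" using R_mu.IH by blast
    moreover have "(shiftm m)(Suc c := Some j') = shiftm (m(c := Some j'))" by (auto simp: shiftm_def fun_eq_iff split: nat.split)
    ultimately show "R \<rho> (m(c := Some j')) (Mu p) (msubst (Mu q) c (Var j'))" by (auto intro: R_A.intros)
  qed
next
  case (R_mapp m b \<rho> p q)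
  show ?case proof (intro allI impI)
    fix c j' assume h: "m c = None"
    have ih: "R \<rho> (m(c := Some j')) p (msubst q c (Var j'))" using R_mapp.IH h by blast
    show "R \<rho> (m(c := Some j')) (MApp b p) (msubst (MApp b q) c (Var j'))"
    proof (cases "b = c")
      case True
      then show ?thesis using ih by (auto intro!: R_mark A_app)
    next
      case False
      have "(m(c := Some j')) b = None" using False R_mapp.hyps by simp
      then show ?thesis using False ih by (simp add: R_A.R_mapp)
    qed
  qed
next
  case (R_mark m b j \<rho> p q)
  show ?case proof (intro allI impI)
    fix c j' assume h: "m c = None"
    have ih: "A \<rho> (m(c := Some j')) j p (msubst q c (Var j'))" using R_mark.IH h by blast
    have "b \<noteq> c" using h R_mark.hyps by auto
    then show "R \<rho> (m(c := Some j')) (MApp b p) (msubst (MApp b q) c (Var j'))"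
      using ih R_mark.hyps by (auto intro!: R_A.intros)
  qed
next
  case (A_app \<rho> m p q j)
  then show ?case by (auto intro: R_A.intros)
next
  case (A_lam j \<rho> m p q)
  then show ?case by (auto intro: R_A.intros)
next
  case (A_mu \<rho> j m p q)
  show ?case proof (intro allI impI)
    fix c j' assume h: "m c = None"
    have "consm j m (Suc c) = None" using h by (simp add: consm_def)
    then have "R \<rho> ((consm j m)(Suc c := Some j')) p (msubst q (Suc c) (Var j'))" using A_mu.IH by blast
    moreover have "(consm j m)(Suc c := Some j') = consm j (m(c := Some j'))" by (auto simp: consm_def fun_eq_iff split: nat.split)
    ultimately show "A \<rho> (m(c := Some j')) j (Mu p) (msubst (Mu q) c (Var j'))" by (auto intro: R_A.intros)
  qed
qed

lemma R_ms0:
 shows "R \<rho> m p q \<Longrightarrow> \<forall>c s s'. m c = None \<longrightarrow> R \<rho> m s s' \<longrightarrow> R \<rho> m (msubst p c s) (msubst q c s')"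
 and "A \<rho> m j p q \<Longrightarrow> \<forall>c s s'. m c = None \<longrightarrow> R \<rho> m s s' \<longrightarrow> A \<rho> m j (msubst p c s) (msubst q c s')"
proof (induction rule: R_A.inducts)
  case (R_var \<rho> m i)
  then show ?case by (auto intro: R_A.intros)
next
  case (R_lam \<rho> m p q)
  show ?case proof (intro allI impI)
    fix c s s' assume h: "m c = None" "R \<rho> m s s'"
    have "liftm m c = None" using h by (simp add: liftm_def)
    moreover have "R (lift \<rho>) (liftm m) (ren Suc s) (ren Suc s')" using h R_lift by blast
    ultimately have "R (lift \<rho>) (liftm m) (msubst p c (ren Suc s)) (msubst q c (ren Suc s'))" using R_lam.IH by blast
    then show "R \<rho> m (msubst (Lam p) c s) (msubst (Lam q) c s')" by (auto simp: liftL0 intro: R_A.intros)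
  qed
next
  case (R_app \<rho> m p q p' q')
  then show ?case by (auto intro: R_A.intros)
next
  case (R_mu \<rho> m p q)
  show ?case proof (intro allI impI)
    fix c s s' assume h: "m c = None" "R \<rho> m s s'"
    have "shiftm m (Suc c) = None" using h by (simp add: shiftm_def)
    moreover have "R \<rho> (shiftm m) (liftM 0 s) (liftM 0 s')" using h(2) by (rule R_liftM) (simp add: shiftm_def)
    ultimately have "R \<rho> (shiftm m) (msubst p (Suc c) (liftM 0 s)) (msubst q (Suc c) (liftM 0 s'))" using R_mu.IH by blast
    then show "R \<rho> m (msubst (Mu p) c s) (msubst (Mu q) c s')" by (auto intro: R_A.intros)
  qed
next
  case (R_mapp m b \<rho> p q)
  show ?case proof (intro allI impI)
    fix c s s' assume h: "m c = None" "R \<rho> m s s'"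
    have ih: "R \<rho> m (msubst p c s) (msubst q c s')" using R_mapp.IH h by blast
    show "R \<rho> m (msubst (MApp b p) c s) (msubst (MApp b q) c s')"
      using ih h R_mapp.hyps by (simp add: R_A.R_mapp R_A.R_app)
  qed
next
  case (R_mark m b j \<rho> p q)
  show ?case proof (intro allI impI)
    fix c s s' assume h: "m c = None" "R \<rho> m s s'"
    have ih: "A \<rho> m j (msubst p c s) (msubst q c s')" using R_mark.IH h by blast
    have "b \<noteq> c" using h R_mark.hyps by auto
    then show "R \<rho> m (msubst (MApp b p) c s) (msubst (MApp b q) c s')"
      using ih R_mark.hyps by (auto intro!: R_A.intros)
  qed
next
  case (A_app \<rho> m p q j)
  then show ?case by (auto intro: R_A.intros)
next
  case (A_lam j \<rho> m p q)
  show ?case proof (intro allI impI)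
    fix c s s' assume h: "m c = None" "R \<rho> m s s'"
    have "R (consr j \<rho>) m (ren Suc s) s'" using h R_liftu by blast
    then have "R (consr j \<rho>) m (msubst p c (ren Suc s)) (msubst q c s')" using A_lam.IH h by blast
    then show "A \<rho> m j (msubst (Lam p) c s) (msubst q c s')" by (auto simp: liftL0 intro: R_A.intros)
  qed
next
  case (A_mu \<rho> j m p q)
  show ?case proof (intro allI impI)
    fix c s s' assume h: "m c = None" "R \<rho> m s s'"
    have "consm j m (Suc c) = None" using h by (simp add: consm_def)
    moreover have "R \<rho> (consm j m) (liftM 0 s) (liftM 0 s')" using h(2) by (rule R_liftM) (simp add: consm_def)
    ultimately have "R \<rho> (consm j m) (msubst p (Suc c) (liftM 0 s)) (msubst q (Suc c) (liftM 0 s'))" using A_mu.IH by blast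
    then show "A \<rho> m j (msubst (Mu p) c s) (msubst (Mu q) c s')" by (auto intro: R_A.intros)
  qed
qed


definition dn :: "nat \<Rightarrow> nat \<Rightarrow> nat" where "dn k x = (if x < k then x else x - 1)"
definition up :: "nat \<Rightarrow> nat \<Rightarrow> nat" where "up k i = (if i < k then i else Suc i)"

lemma R_sub0:
 shows "R \<rho> m p q \<Longrightarrow> \<forall>k k' s s' (\<rho>'::nat\<Rightarrow>nat) (m'::nat\<Rightarrow>nat option). \<rho> k = k' \<longrightarrow> (\<forall>i. i \<noteq> k \<longrightarrow> \<rho> i \<noteq> k') \<longrightarrow> (\<forall>b. m b \<noteq> Some k')
     \<longrightarrow> (\<forall>i. \<rho>' i = dn k' (\<rho> (up k i))) \<longrightarrow> (\<forall>b. m' b = map_option (dn k') (m b)) \<longrightarrow> R \<rho>' m' s s'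
     \<longrightarrow> R \<rho>' m' (substL p k s) (substL q k' s')"
 and "A \<rho> m j p q \<Longrightarrow> \<forall>k k' s s' (\<rho>'::nat\<Rightarrow>nat) (m'::nat\<Rightarrow>nat option). \<rho> k = k' \<longrightarrow> (\<forall>i. i \<noteq> k \<longrightarrow> \<rho> i \<noteq> k') \<longrightarrow> (\<forall>b. m b \<noteq> Some k')
     \<longrightarrow> j \<noteq> k' \<longrightarrow> (\<forall>i. \<rho>' i = dn k' (\<rho> (up k i))) \<longrightarrow> (\<forall>b. m' b = map_option (dn k') (m b)) \<longrightarrow> R \<rho>' m' s s'
     \<longrightarrow> A \<rho>' m' (dn k' j) (substL p k s) (substL q k' s')"
proof (induction rule: R_A.inducts)
  case (R_var \<rho> m i)
  show ?case proof (intro allI impI)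
    fix k k' s s' and \<rho>' :: "nat\<Rightarrow>nat" and m' :: "nat\<Rightarrow>nat option"
    assume h: "\<rho> k = k'" "\<forall>i. i \<noteq> k \<longrightarrow> \<rho> i \<noteq> k'" "\<forall>i. \<rho>' i = dn k' (\<rho> (up k i))" "R \<rho>' m' s s'"
    show "R \<rho>' m' (substL (Var i) k s) (substL (Var (\<rho> i)) k' s')"
    proof (cases "i = k")
      case True then show ?thesis using h by simp
    next
      case False
      then have ne: "\<rho> i \<noteq> k'" using h by auto
      define i' where "i' = (if i < k then i else i - 1)"
      have "up k i' = i" using False by (auto simp: up_def i'_def)
      then have "\<rho>' i' = dn k' (\<rho> i)" using h by simp
      then have "R \<rho>' m' (Var i') (Var (dn k' (\<rho> i)))" by (intro R_var') simp
      then show ?thesis using False ne by (auto simp: i'_def dn_def)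
    qed
  qed
next
  case (R_lam \<rho> m p q)
  show ?case proof (intro allI impI)
    fix k k' s s' and \<rho>' :: "nat\<Rightarrow>nat" and m' :: "nat\<Rightarrow>nat option"
    assume h: "\<rho> k = k'" "\<forall>i. i \<noteq> k \<longrightarrow> \<rho> i \<noteq> k'" "\<forall>b. m b \<noteq> Some k'" "\<forall>i. \<rho>' i = dn k' (\<rho> (up k i))"
      "\<forall>b. m' b = map_option (dn k') (m b)" "R \<rho>' m' s s'"
    have c1: "lift \<rho> (Suc k) = Suc k'" using h by (simp add: lift_def)
    have c2: "\<forall>i. i \<noteq> Suc k \<longrightarrow> lift \<rho> i \<noteq> Suc k'" using h by (auto simp: lift_def split: nat.split)
    have c3: "\<forall>b. liftm m b \<noteq> Some (Suc k')" using h by (auto simp: liftm_def)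
    have c4: "\<forall>i. lift \<rho>' i = dn (Suc k') (lift \<rho> (up (Suc k) i))"
    proof
      fix i show "lift \<rho>' i = dn (Suc k') (lift \<rho> (up (Suc k) i))"
      proof (cases i)
        case 0 then show ?thesis by (simp add: lift_def dn_def up_def)
      next
        case (Suc i0)
        have "up k i0 \<noteq> k" by (simp add: up_def)
        then have "\<rho> (up k i0) \<noteq> k'" using h by auto
        then show ?thesis using Suc h by (auto simp: lift_def dn_def up_def)
      qed
    qed
    have c5: "\<forall>b. liftm m' b = map_option (dn (Suc k')) (liftm m b)"
    proof
      fix b show "liftm m' b = map_option (dn (Suc k')) (liftm m b)"
        using h(3)[rule_format, of b] h(5) by (cases "m b") (auto simp: liftm_def dn_def)
    qed
    have c6: "R (lift \<rho>') (liftm m') (ren Suc s) (ren Suc s')" using h R_lift by blast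
    have "R (lift \<rho>') (liftm m') (substL p (Suc k) (ren Suc s)) (substL q (Suc k') (ren Suc s'))"
      using R_lam.IH c1 c2 c3 c4 c5 c6 by blast
    then show "R \<rho>' m' (substL (Lam p) k s) (substL (Lam q) k' s')" by (auto simp: liftL0 intro: R_A.intros)
  qed
next
  case (R_app \<rho> m p q p' q')
  show ?case proof (intro allI impI)
    fix k k' s s' and \<rho>' :: "nat\<Rightarrow>nat" and m' :: "nat\<Rightarrow>nat option"
    assume h: "\<rho> k = k'" "\<forall>i. i \<noteq> k \<longrightarrow> \<rho> i \<noteq> k'" "\<forall>b. m b \<noteq> Some k'" "\<forall>i. \<rho>' i = dn k' (\<rho> (up k i))"
      "\<forall>b. m' b = map_option (dn k') (m b)" "R \<rho>' m' s s'"
    have "R \<rho>' m' (substL p k s) (substL q k' s')" using R_app.IH(1) h by blast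
    moreover have "R \<rho>' m' (substL p' k s) (substL q' k' s')" using R_app.IH(2) h by blast
    ultimately show "R \<rho>' m' (substL (App p p') k s) (substL (App q q') k' s')" by (simp add: R_A.R_app)
  qed
next
  case (R_mu \<rho> m p q)
  show ?case proof (intro allI impI)
    fix k k' s s' and \<rho>' :: "nat\<Rightarrow>nat" and m' :: "nat\<Rightarrow>nat option"
    assume h: "\<rho> k = k'" "\<forall>i. i \<noteq> k \<longrightarrow> \<rho> i \<noteq> k'" "\<forall>b. m b \<noteq> Some k'" "\<forall>i. \<rho>' i = dn k' (\<rho> (up k i))"
      "\<forall>b. m' b = map_option (dn k') (m b)" "R \<rho>' m' s s'"
    have c3: "\<forall>b. shiftm m b \<noteq> Some k'" using h by (auto simp: shiftm_def split: nat.split)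
    have c5: "\<forall>b. shiftm m' b = map_option (dn k') (shiftm m b)" using h by (auto simp: shiftm_def split: nat.split)
    have c6: "R \<rho>' (shiftm m') (liftM 0 s) (liftM 0 s')" using h(6) by (rule R_liftM) (simp add: shiftm_def)
    have "R \<rho>' (shiftm m') (substL p k (liftM 0 s)) (substL q k' (liftM 0 s'))"
      using R_mu.IH h(1,2,4) c3 c5 c6 by blast
    then show "R \<rho>' m' (substL (Mu p) k s) (substL (Mu q) k' s')" by (auto intro: R_A.intros)
  qed
next
  case (R_mapp m b \<rho> p q)
  show ?case proof (intro allI impI)
    fix k k' s s' and \<rho>' :: "nat\<Rightarrow>nat" and m' :: "nat\<Rightarrow>nat option"
    assume h: "\<rho> k = k'" "\<forall>i. i \<noteq> k \<longrightarrow> \<rho> i \<noteq> k'" "\<forall>b. m b \<noteq> Some k'" "\<forall>i. \<rho>' i = dn k' (\<rho> (up k i))"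
      "\<forall>b. m' b = map_option (dn k') (m b)" "R \<rho>' m' s s'"
    have "R \<rho>' m' (substL p k s) (substL q k' s')" using R_mapp.IH h by blast
    moreover have "m' b = None" using h R_mapp.hyps by simp
    ultimately show "R \<rho>' m' (substL (MApp b p) k s) (substL (MApp b q) k' s')" by (simp add: R_A.R_mapp)
  qed
next
  case (R_mark m b j \<rho> p q)
  show ?case proof (intro allI impI)
    fix k k' s s' and \<rho>' :: "nat\<Rightarrow>nat" and m' :: "nat\<Rightarrow>nat option"
    assume h: "\<rho> k = k'" "\<forall>i. i \<noteq> k \<longrightarrow> \<rho> i \<noteq> k'" "\<forall>b. m b \<noteq> Some k'" "\<forall>i. \<rho>' i = dn k' (\<rho> (up k i))"
      "\<forall>b. m' b = map_option (dn k') (m b)" "R \<rho>' m' s s'"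
    have "j \<noteq> k'" using h(3) R_mark.hyps by metis
    then have "A \<rho>' m' (dn k' j) (substL p k s) (substL q k' s')" using R_mark.IH h by blast
    moreover have "m' b = Some (dn k' j)" using h R_mark.hyps by simp
    ultimately show "R \<rho>' m' (substL (MApp b p) k s) (substL (MApp b q) k' s')" by (simp add: R_A.R_mark)
  qed
next
  case (A_app \<rho> m p q j)
  show ?case proof (intro allI impI)
    fix k k' s s' and \<rho>' :: "nat\<Rightarrow>nat" and m' :: "nat\<Rightarrow>nat option"
    assume h: "\<rho> k = k'" "\<forall>i. i \<noteq> k \<longrightarrow> \<rho> i \<noteq> k'" "\<forall>b. m b \<noteq> Some k'" "j \<noteq> k'" "\<forall>i. \<rho>' i = dn k' (\<rho> (up k i))"
      "\<forall>b. m' b = map_option (dn k') (m b)" "R \<rho>' m' s s'"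
    have "R \<rho>' m' (substL p k s) (substL q k' s')" using A_app.IH h by blast
    moreover have "substL (Var j) k' s' = Var (dn k' j)" using h(4) by (auto simp: dn_def)
    ultimately show "A \<rho>' m' (dn k' j) (substL p k s) (substL (App q (Var j)) k' s')" by (simp add: R_A.A_app)
  qed
next
  case (A_lam j \<rho> m p q)
  show ?case proof (intro allI impI)
    fix k k' s s' and \<rho>' :: "nat\<Rightarrow>nat" and m' :: "nat\<Rightarrow>nat option"
    assume h: "\<rho> k = k'" "\<forall>i. i \<noteq> k \<longrightarrow> \<rho> i \<noteq> k'" "\<forall>b. m b \<noteq> Some k'" "j \<noteq> k'" "\<forall>i. \<rho>' i = dn k' (\<rho> (up k i))"
      "\<forall>b. m' b = map_option (dn k') (m b)" "R \<rho>' m' s s'"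
    have c1: "consr j \<rho> (Suc k) = k'" using h by (simp add: consr_def)
    have c2: "\<forall>i. i \<noteq> Suc k \<longrightarrow> consr j \<rho> i \<noteq> k'" using h by (auto simp: consr_def split: nat.split)
    have c4: "\<forall>i. consr (dn k' j) \<rho>' i = dn k' (consr j \<rho> (up (Suc k) i))"
    proof
      fix i show "consr (dn k' j) \<rho>' i = dn k' (consr j \<rho> (up (Suc k) i))"
        using h by (cases i) (auto simp: consr_def up_def)
    qed
    have c6: "R (consr (dn k' j) \<rho>') m' (ren Suc s) s'" using h R_liftu by blast
    have "R (consr (dn k' j) \<rho>') m' (substL p (Suc k) (ren Suc s)) (substL q k' s')"
      using A_lam.IH c1 c2 h(3,6) c4 c6 by blast
    then show "A \<rho>' m' (dn k' j) (substL (Lam p) k s) (substL q k' s')" by (auto simp: liftL0 intro: R_A.intros)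
  qed
next
  case (A_mu \<rho> j m p q)
  show ?case proof (intro allI impI)
    fix k k' s s' and \<rho>' :: "nat\<Rightarrow>nat" and m' :: "nat\<Rightarrow>nat option"
    assume h: "\<rho> k = k'" "\<forall>i. i \<noteq> k \<longrightarrow> \<rho> i \<noteq> k'" "\<forall>b. m b \<noteq> Some k'" "j \<noteq> k'" "\<forall>i. \<rho>' i = dn k' (\<rho> (up k i))"
      "\<forall>b. m' b = map_option (dn k') (m b)" "R \<rho>' m' s s'"
    have c3: "\<forall>b. consm j m b \<noteq> Some k'" using h by (auto simp: consm_def split: nat.split)
    have c5: "\<forall>b. consm (dn k' j) m' b = map_option (dn k') (consm j m b)" using h by (auto simp: consm_def split: nat.split)
    have c6: "R \<rho>' (consm (dn k' j) m') (liftM 0 s) (liftM 0 s')" using h(7) by (rule R_liftM) (simp add: consm_def)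
    have "R \<rho>' (consm (dn k' j) m') (substL p k (liftM 0 s)) (substL q k' (liftM 0 s'))"
      using A_mu.IH h(1,2,5) c3 c5 c6 by blast
    then show "A \<rho>' m' (dn k' j) (substL (Mu p) k s) (substL (Mu q) k' s')" by (auto intro: R_A.intros)
  qed
qed


inductive_cases RLamE: "R \<rho> m u (Lam q)"
inductive_cases RMuE: "R \<rho> m u (Mu q)"
inductive_cases RLamE2: "R \<rho> m (Lam p) v"
inductive_cases RMuE2: "R \<rho> m (Mu p) v"
inductive_cases red1VarE: "red1 (Var i) t'"
inductive_cases red1LamE: "red1 (Lam t) t'"
inductive_cases red1AppE: "red1 (App t u) t'"
inductive_cases red1MuE: "red1 (Mu t) t'"
inductive_cases red1MAppE: "red1 (MApp a t) t'"


lemma R_sub: "R \<rho> m p q \<Longrightarrow> \<rho> k = k' \<Longrightarrow> (\<And>i. i \<noteq> k \<Longrightarrow> \<rho> i \<noteq> k') \<Longrightarrow> (\<And>b. m b \<noteq> Some k')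
  \<Longrightarrow> (\<And>i. \<rho>' i = dn k' (\<rho> (up k i))) \<Longrightarrow> (\<And>b. m' b = map_option (dn k') (m b)) \<Longrightarrow> R \<rho>' m' s s'
  \<Longrightarrow> R \<rho>' m' (substL p k s) (substL q k' s')"
  by (rule R_sub0(1)[rule_format]) auto

lemma R_beta: "R (lift \<rho>) (liftm m) a b \<Longrightarrow> R \<rho> m p' q' \<Longrightarrow> R \<rho> m (substL a 0 p') (substL b 0 q')"
  apply (erule R_sub)
  apply (auto simp: lift_def liftm_def dn_def up_def option.map_comp o_def option.map_ident split: nat.split)
  done

lemma R_ms: "R \<rho> m p q \<Longrightarrow> m c = None \<Longrightarrow> R \<rho> m s s' \<Longrightarrow> R \<rho> m (msubst p c s) (msubst q c s')"
  using R_ms0(1) by blast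

lemma R_msv: "R \<rho> m p q \<Longrightarrow> m c = None \<Longrightarrow> R \<rho> (m(c := Some j')) p (msubst q c (Var j'))"
  using R_msv0(1) by blast

lemma sim0:
 shows "R \<rho> m u v \<Longrightarrow> \<forall>v'. red1 v v' \<longrightarrow> (\<exists>u'. red1 u u' \<and> R \<rho> m u' v') \<or> R \<rho> m u v'"
 and "A \<rho> m j u v \<Longrightarrow> \<forall>v'. red1 v v' \<longrightarrow> (\<exists>u'. red1 u u' \<and> A \<rho> m j u' v') \<or> A \<rho> m j u v'"
proof (induction rule: R_A.inducts)
  case (R_var \<rho> m i)
  then show ?case by (auto elim: red1VarE)
next
  case (R_lam \<rho> m p q)
  show ?case proof (intro allI impI)
    fix v' assume "red1 (Lam q) v'"
    then obtain q' where v': "v' = Lam q'" "red1 q q'" by (auto elim: red1LamE)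
    then have "(\<exists>u'. red1 p u' \<and> R (lift \<rho>) (liftm m) u' q') \<or> R (lift \<rho>) (liftm m) p q'" using R_lam.IH by blast
    then show "(\<exists>u'. red1 (Lam p) u' \<and> R \<rho> m u' v') \<or> R \<rho> m (Lam p) v'"
    proof
      assume "\<exists>u'. red1 p u' \<and> R (lift \<rho>) (liftm m) u' q'"
      then obtain u' where "red1 p u'" "R (lift \<rho>) (liftm m) u' q'" by blast
      then have "red1 (Lam p) (Lam u')" "R \<rho> m (Lam u') v'" using v' by (auto intro: red1.lam R_A.R_lam)
      then show ?thesis by blast
    next
      assume "R (lift \<rho>) (liftm m) p q'"
      then show ?thesis using v' by (simp add: R_A.R_lam)
    qed
  qed
next
  case (R_app \<rho> m p q p' q')
  show ?case proof (intro allI impI)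
    fix v' assume red: "red1 (App q q') v'"
    show "(\<exists>u'. red1 (App p p') u' \<and> R \<rho> m u' v') \<or> R \<rho> m (App p p') v'"
    proof (rule red1AppE[OF red])
      fix b assume 1: "q = Lam b" "v' = substL b 0 q'"
      from \<open>R \<rho> m p q\<close> obtain a where a: "p = Lam a" "R (lift \<rho>) (liftm m) a b" using 1 by (auto elim: RLamE)
      have "R \<rho> m (substL a 0 p') (substL b 0 q')" using a(2) R_app.hyps(2) by (rule R_beta)
      moreover have "red1 (App p p') (substL a 0 p')" using a by (simp add: red1.beta)
      ultimately show ?thesis using 1 by blast
    next
      fix b assume 2: "q = Mu b" "v' = Mu (msubst b 0 (liftM 0 q'))"
      from \<open>R \<rho> m p q\<close> obtain a where a: "p = Mu a" "R \<rho> (shiftm m) a b" using 2 by (auto elim: RMuE)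
      have "R \<rho> (shiftm m) (liftM 0 p') (liftM 0 q')" using R_app.hyps(2) by (rule R_liftM) (simp add: shiftm_def)
      then have "R \<rho> (shiftm m) (msubst a 0 (liftM 0 p')) (msubst b 0 (liftM 0 q'))"
        using a(2) R_ms by (simp add: shiftm_def)
      then have "R \<rho> m (Mu (msubst a 0 (liftM 0 p'))) v'" using 2 by (simp add: R_A.R_mu)
      moreover have "red1 (App p p') (Mu (msubst a 0 (liftM 0 p')))" using a by (simp add: red1.mu)
      ultimately show ?thesis by blast
    next
      fix q2 assume 3: "v' = App q2 q'" "red1 q q2"
      then have "(\<exists>u'. red1 p u' \<and> R \<rho> m u' q2) \<or> R \<rho> m p q2" using R_app.IH by blast
      then show ?thesis
      proof
        assume "\<exists>u'. red1 p u' \<and> R \<rho> m u' q2"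
        then obtain u' where "red1 p u'" "R \<rho> m u' q2" by blast
        then have "red1 (App p p') (App u' p')" "R \<rho> m (App u' p') v'" using 3 R_app.hyps by (auto intro: red1.appL R_A.R_app)
        then show ?thesis by blast
      next
        assume "R \<rho> m p q2"
        then show ?thesis using 3 R_app.hyps by (simp add: R_A.R_app)
      qed
    next
      fix q2 assume 4: "v' = App q q2" "red1 q' q2"
      then have "(\<exists>u'. red1 p' u' \<and> R \<rho> m u' q2) \<or> R \<rho> m p' q2" using R_app.IH by blast
      then show ?thesis
      proof
        assume "\<exists>u'. red1 p' u' \<and> R \<rho> m u' q2"
        then obtain u' where "red1 p' u'" "R \<rho> m u' q2" by blast
        then have "red1 (App p p') (App p u')" "R \<rho> m (App p u') v'" using 4 R_app.hyps by (auto intro: red1.appR R_A.R_app)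
        then show ?thesis by blast
      next
        assume "R \<rho> m p' q2"
        then show ?thesis using 4 R_app.hyps by (simp add: R_A.R_app)
      qed
    qed
  qed
next
  case (R_mu \<rho> m p q)
  show ?case proof (intro allI impI)
    fix v' assume "red1 (Mu q) v'"
    then obtain q' where v': "v' = Mu q'" "red1 q q'" by (auto elim: red1MuE)
    then have "(\<exists>u'. red1 p u' \<and> R \<rho> (shiftm m) u' q') \<or> R \<rho> (shiftm m) p q'" using R_mu.IH by blast
    then show "(\<exists>u'. red1 (Mu p) u' \<and> R \<rho> m u' v') \<or> R \<rho> m (Mu p) v'"
    proof
      assume "\<exists>u'. red1 p u' \<and> R \<rho> (shiftm m) u' q'"
      then obtain u' where "red1 p u'" "R \<rho> (shiftm m) u' q'" by blast
      then have "red1 (Mu p) (Mu u')" "R \<rho> m (Mu u') v'" using v' by (auto intro: red1.muC R_A.R_mu)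
      then show ?thesis by blast
    next
      assume "R \<rho> (shiftm m) p q'"
      then show ?thesis using v' by (simp add: R_A.R_mu)
    qed
  qed
next
  case (R_mapp m b \<rho> p q)
  show ?case proof (intro allI impI)
    fix v' assume "red1 (MApp b q) v'"
    then obtain q' where v': "v' = MApp b q'" "red1 q q'" by (auto elim: red1MAppE)
    then have "(\<exists>u'. red1 p u' \<and> R \<rho> m u' q') \<or> R \<rho> m p q'" using R_mapp.IH by blast
    then show "(\<exists>u'. red1 (MApp b p) u' \<and> R \<rho> m u' v') \<or> R \<rho> m (MApp b p) v'"
    proof
      assume "\<exists>u'. red1 p u' \<and> R \<rho> m u' q'"
      then obtain u' where "red1 p u'" "R \<rho> m u' q'" by blast
      then have "red1 (MApp b p) (MApp b u')" "R \<rho> m (MApp b u') v'" using v' R_mapp.hyps by (auto simp: red1.mapp R_A.R_mapp)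
      then show ?thesis by blast
    next
      assume "R \<rho> m p q'"
      then show ?thesis using v' R_mapp.hyps by (simp add: R_A.R_mapp)
    qed
  qed
next
  case (R_mark m b j \<rho> p q)
  show ?case proof (intro allI impI)
    fix v' assume "red1 (MApp b q) v'"
    then obtain q' where v': "v' = MApp b q'" "red1 q q'" by (auto elim: red1MAppE)
    then have "(\<exists>u'. red1 p u' \<and> A \<rho> m j u' q') \<or> A \<rho> m j p q'" using R_mark.IH by blast
    then show "(\<exists>u'. red1 (MApp b p) u' \<and> R \<rho> m u' v') \<or> R \<rho> m (MApp b p) v'"
    proof
      assume "\<exists>u'. red1 p u' \<and> A \<rho> m j u' q'"
      then obtain u' where "red1 p u'" "A \<rho> m j u' q'" by blast
      then have "red1 (MApp b p) (MApp b u')" "R \<rho> m (MApp b u') v'" using v' R_mark.hyps by (auto simp: red1.mapp R_A.R_mark)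
      then show ?thesis by blast
    next
      assume "A \<rho> m j p q'"
      then show ?thesis using v' R_mark.hyps by (simp add: R_A.R_mark)
    qed
  qed
next
  case (A_app \<rho> m p q j)
  show ?case proof (intro allI impI)
    fix v' assume red: "red1 (App q (Var j)) v'"
    show "(\<exists>u'. red1 p u' \<and> A \<rho> m j u' v') \<or> A \<rho> m j p v'"
    proof (rule red1AppE[OF red])
      fix b assume 1: "q = Lam b" "v' = substL b 0 (Var j)"
      from \<open>R \<rho> m p q\<close> obtain a where a: "p = Lam a" "R (lift \<rho>) (liftm m) a b" using 1 by (auto elim: RLamE)
      have "R (consr j \<rho>) m (ren id a) (ren (\<lambda>i. if i < 0 then i else if i = 0 then j else i - 1) b)"
        using a(2) by (rule R_ren) (auto simp: lift_def liftm_def consr_def option.map_comp o_def option.map_ident split: nat.split)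
      then have "R (consr j \<rho>) m a (substL b 0 (Var j))" by (simp add: substL_ren ren_id)
      then have "A \<rho> m j p v'" using 1 a by (simp add: R_A.A_lam)
      then show ?thesis by blast
    next
      fix b assume 2: "q = Mu b" "v' = Mu (msubst b 0 (liftM 0 (Var j)))"
      from \<open>R \<rho> m p q\<close> obtain a where a: "p = Mu a" "R \<rho> (shiftm m) a b" using 2 by (auto elim: RMuE)
      have "R \<rho> ((shiftm m)(0 := Some j)) a (msubst b 0 (Var j))"
        using a(2) by (rule R_msv) (simp add: shiftm_def)
      moreover have "(shiftm m)(0 := Some j) = consm j m" by (auto simp: shiftm_def consm_def fun_eq_iff split: nat.split)
      ultimately have "A \<rho> m j p v'" using 2 a by (simp add: R_A.A_mu)
      then show ?thesis by blast
    next
      fix q2 assume 3: "v' = App q2 (Var j)" "red1 q q2"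
      then have "(\<exists>u'. red1 p u' \<and> R \<rho> m u' q2) \<or> R \<rho> m p q2" using A_app.IH by blast
      then show ?thesis
      proof
        assume "\<exists>u'. red1 p u' \<and> R \<rho> m u' q2"
        then obtain u' where "red1 p u'" "R \<rho> m u' q2" by blast
        then have "A \<rho> m j u' v'" using 3 by (simp add: R_A.A_app)
        then show ?thesis using \<open>red1 p u'\<close> by blast
      next
        assume "R \<rho> m p q2"
        then show ?thesis using 3 by (simp add: R_A.A_app)
      qed
    next
      fix q2 assume 4: "v' = App q q2" "red1 (Var j) q2"
      then show ?thesis by (auto elim: red1VarE)
    qed
  qed
next
  case (A_lam j \<rho> m p q)
  show ?case proof (intro allI impI)
    fix v' assume "red1 q v'"
    then have "(\<exists>u'. red1 p u' \<and> R (consr j \<rho>) m u' v') \<or> R (consr j \<rho>) m p v'" using A_lam.IH by blast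
    then show "(\<exists>u'. red1 (Lam p) u' \<and> A \<rho> m j u' v') \<or> A \<rho> m j (Lam p) v'"
    proof
      assume "\<exists>u'. red1 p u' \<and> R (consr j \<rho>) m u' v'"
      then obtain u' where "red1 p u'" "R (consr j \<rho>) m u' v'" by blast
      then have "red1 (Lam p) (Lam u')" "A \<rho> m j (Lam u') v'" by (auto simp: red1.lam R_A.A_lam)
      then show ?thesis by blast
    next
      assume "R (consr j \<rho>) m p v'"
      then show ?thesis by (simp add: R_A.A_lam)
    qed
  qed
next
  case (A_mu \<rho> j m p q)
  show ?case proof (intro allI impI)
    fix v' assume "red1 (Mu q) v'"
    then obtain q' where v': "v' = Mu q'" "red1 q q'" by (auto elim: red1MuE)
    then have "(\<exists>u'. red1 p u' \<and> R \<rho> (consm j m) u' q') \<or> R \<rho> (consm j m) p q'" using A_mu.IH by blast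
    then show "(\<exists>u'. red1 (Mu p) u' \<and> A \<rho> m j u' v') \<or> A \<rho> m j (Mu p) v'"
    proof
      assume "\<exists>u'. red1 p u' \<and> R \<rho> (consm j m) u' q'"
      then obtain u' where "red1 p u'" "R \<rho> (consm j m) u' q'" by blast
      then have "red1 (Mu p) (Mu u')" "A \<rho> m j (Mu u') v'" using v' by (auto simp: red1.muC R_A.A_mu)
      then show ?thesis by blast
    next
      assume "R \<rho> (consm j m) p q'"
      then show ?thesis using v' by (simp add: R_A.A_mu)
    qed
  qed
qed

lemma nrm0:
 shows "R \<rho> m u v \<Longrightarrow> \<forall>u'. red1 u u' \<longrightarrow> (\<exists>v'. red1 v v')"
 and "A \<rho> m j u v \<Longrightarrow> \<forall>u'. red1 u u' \<longrightarrow> (\<exists>v'. red1 v v')"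
proof (induction rule: R_A.inducts)
  case (R_var \<rho> m i)
  then show ?case by (auto elim: red1VarE)
next
  case (R_lam \<rho> m p q)
  then show ?case by (blast elim: red1LamE intro: red1.lam)
next
  case (R_app \<rho> m p q p' q')
  show ?case proof (intro allI impI)
    fix u' assume red: "red1 (App p p') u'"
    show "\<exists>v'. red1 (App q q') v'"
    proof (rule red1AppE[OF red])
      fix a assume "p = Lam a"
      then obtain b where "q = Lam b" using R_app.hyps(1) by (auto elim: RLamE2)
      then show ?thesis by (blast intro: red1.beta)
    next
      fix a assume "p = Mu a"
      then obtain b where "q = Mu b" using R_app.hyps(1) by (auto elim: RMuE2)
      then show ?thesis by (blast intro: red1.mu)
    next
      fix p2 assume "u' = App p2 p'" "red1 p p2"
      then show ?thesis using R_app.IH by (blast intro: red1.appL)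
    next
      fix p2 assume "u' = App p p2" "red1 p' p2"
      then show ?thesis using R_app.IH by (blast intro: red1.appR)
    qed
  qed
next
  case (R_mu \<rho> m p q)
  then show ?case by (blast elim: red1MuE intro: red1.muC)
next
  case (R_mapp m b \<rho> p q)
  then show ?case by (blast elim: red1MAppE intro: red1.mapp)
next
  case (R_mark m b j \<rho> p q)
  then show ?case by (blast elim: red1MAppE intro: red1.mapp)
next
  case (A_app \<rho> m p q j)
  then show ?case by (blast intro: red1.appL)
next
  case (A_lam j \<rho> m p q)
  then show ?case by (blast elim: red1LamE)
next
  case (A_mu \<rho> j m p q)
  then show ?case by (blast elim: red1MuE intro: red1.muC)
qed

lemma A_normalizable: "red1\<^sup>*\<^sup>* v n \<Longrightarrow> normal n \<Longrightarrow> A \<rho> m j u v \<Longrightarrow> normalizable u"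
proof (induction arbitrary: u rule: converse_rtranclp_induct)
  case base
  then have "normal u" using nrm0(2) unfolding normal_def by blast
  then show ?case unfolding normalizable_def by blast
next
  case (step v v1)
  have "(\<exists>u'. red1 u u' \<and> A \<rho> m j u' v1) \<or> A \<rho> m j u v1" using sim0(2) step by blast
  then show ?case
  proof
    assume "\<exists>u'. red1 u u' \<and> A \<rho> m j u' v1"
    then obtain u' where "red1 u u'" "A \<rho> m j u' v1" by blast
    then have "normalizable u'" using step by blast
    then show ?thesis using \<open>red1 u u'\<close> unfolding normalizable_def
      by (meson converse_rtranclp_into_rtranclp)
  next
    assume "A \<rho> m j u v1"
    then show ?thesis using step by blast
  qed
qed

lemma R_refl: "(\<forall>i. \<rho> i = i) \<Longrightarrow> (\<forall>b. m b = None) \<Longrightarrow> R \<rho> m t t"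
proof (induction t arbitrary: \<rho> m)
  case (Var x)
  then show ?case by (simp add: R_var')
next
  case (Lam t)
  have "\<forall>i. lift \<rho> i = i" using Lam.prems by (auto simp: lift_def split: nat.split)
  moreover have "\<forall>b. liftm m b = None" using Lam.prems by (simp add: liftm_def)
  ultimately show ?case using Lam.IH by (blast intro: R_A.R_lam)
next
  case (App t1 t2)
  then show ?case by (blast intro: R_A.R_app)
next
  case (Mu t)
  have "\<forall>b. shiftm m b = None" using Mu.prems by (simp add: shiftm_def split: nat.split)
  then show ?case using Mu by (blast intro: R_A.R_mu)
next
  case (MApp a t)
  then show ?case by (blast intro: R_A.R_mapp)
qed

theorem mainTheorem13:
  fixes t :: trm and y :: nat
  assumes "normalizable (App t (Var y))"
  shows "normalizable t"
proof -
  obtain n where n: "red1\<^sup>*\<^sup>* (App t (Var y)) n" "normal n" using assms unfolding normalizable_def by blast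
  have "R (\<lambda>i. i) (\<lambda>b. None) t t" by (rule R_refl) auto
  then have "A (\<lambda>i. i) (\<lambda>b. None) y t (App t (Var y))" by (rule R_A.A_app)
  then show ?thesis using A_normalizable n by blast
qed

end
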